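(* Let $\underline{L}$ be a finite lattice. Then there exists a unique DI-core of $\underline{L}$; that is, the family $DI(\underline{L})$ has exactly one smallest element with respect to set inclusion.
   Context: For $u\le v$ in a lattice $L$, $[u,v]=\{x\mid u\le x\le v\}$, $(v]=\{x\mid x\le v\}$, $[u)=\{x\mid u\le x\}$. An interval $[u,v]$ of $L$ is dismantling for $L$ if $u\neq\bot$, $v\neq\top$, $u$ is supremum-prime in $(v]$ (for all $x,y\in(v]$, $u\le x\vee y$ implies $u\le x$ or $u\le y$) and $v$ is infimum-prime in $[u)$ (for all $x,y\in[u)$, $x\wedge y\le v$ implies $x\le v$ or $y\le v$). Removing a dismantling interval from a lattice leaves a lattice (with the restricted order). $DI(\underline{L})$ is the family of all subsets of $L$ obtainable by iterated dismantling starting from $\underline{L}$: $X\in DI(\underline{L})$ iff there is a sequence $L=X_0\supseteq X_1\supseteq\cdots\supseteq X_k=X$ ($k\ge0$) such that for each $i$, $X_{i+1}=X_i\setminus S_i$ for some interval $S_i$ of the lattice $X_i$ that is dismantling for $X_i$. A smallest element of $DI(\underline{L})$ (with respect to inclusion) is called a DI-core of $\underline{L}$. *)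

theory Defs
  imports Main
begin

text \<open>All subsets X of the ambient lattice carry the restricted order.
  Joins/meets, bottom/top and intervals are taken inside X.\<close>

definition is_join_in :: "'a::order set \<Rightarrow> 'a \<Rightarrow> 'a \<Rightarrow> 'a \<Rightarrow> bool" where
  "is_join_in X x y z \<longleftrightarrow> z \<in> X \<and> x \<le> z \<and> y \<le> z \<and> (\<forall>w\<in>X. x \<le> w \<and> y \<le> w \<longrightarrow> z \<le> w)"

definition is_meet_in :: "'a::order set \<Rightarrow> 'a \<Rightarrow> 'a \<Rightarrow> 'a \<Rightarrow> bool" where
  "is_meet_in X x y z \<longleftrightarrow> z \<in> X \<and> z \<le> x \<and> z \<le> y \<and> (\<forall>w\<in>X. w \<le> x \<and> w \<le> y \<longrightarrow> w \<le> z)"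

definition is_bot_of :: "'a::order set \<Rightarrow> 'a \<Rightarrow> bool" where
  "is_bot_of X b \<longleftrightarrow> b \<in> X \<and> (\<forall>x\<in>X. b \<le> x)"

definition is_top_of :: "'a::order set \<Rightarrow> 'a \<Rightarrow> bool" where
  "is_top_of X t \<longleftrightarrow> t \<in> X \<and> (\<forall>x\<in>X. x \<le> t)"

definition interval_in :: "'a::order set \<Rightarrow> 'a \<Rightarrow> 'a \<Rightarrow> 'a set" where
  "interval_in X u v = {x \<in> X. u \<le> x \<and> x \<le> v}"

definition down_in :: "'a::order set \<Rightarrow> 'a \<Rightarrow> 'a set" where
  "down_in X v = {x \<in> X. x \<le> v}"

definition up_in :: "'a::order set \<Rightarrow> 'a \<Rightarrow> 'a set" where
  "up_in X u = {x \<in> X. u \<le> x}"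

definition sup_prime_in :: "'a::order set \<Rightarrow> 'a \<Rightarrow> bool" where
  "sup_prime_in Y u \<longleftrightarrow> (\<forall>x\<in>Y. \<forall>y\<in>Y. \<forall>z. is_join_in Y x y z \<longrightarrow> u \<le> z \<longrightarrow> u \<le> x \<or> u \<le> y)"

definition inf_prime_in :: "'a::order set \<Rightarrow> 'a \<Rightarrow> bool" where
  "inf_prime_in Y v \<longleftrightarrow> (\<forall>x\<in>Y. \<forall>y\<in>Y. \<forall>z. is_meet_in Y x y z \<longrightarrow> z \<le> v \<longrightarrow> x \<le> v \<or> y \<le> v)"

definition dismantling :: "'a::order set \<Rightarrow> 'a \<Rightarrow> 'a \<Rightarrow> bool" where
  "dismantling X u v \<longleftrightarrow> u \<in> X \<and> v \<in> X \<and> u \<le> v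
     \<and> \<not> is_bot_of X u \<and> \<not> is_top_of X v
     \<and> sup_prime_in (down_in X v) u \<and> inf_prime_in (up_in X u) v"

inductive_set DI :: "'a::order set \<Rightarrow> 'a set set" for L :: "'a set" where
  base: "L \<in> DI L"
| step: "X \<in> DI L \<Longrightarrow> dismantling X u v \<Longrightarrow> X - interval_in X u v \<in> DI L"

definition DI_core :: "'a::order set \<Rightarrow> 'a set \<Rightarrow> bool" where
  "DI_core L C \<longleftrightarrow> C \<in> DI L \<and> (\<forall>X\<in>DI L. C \<subseteq> X)"

end

theory Submission
  imports Defs
begin

definition sublat :: "'a::lattice set \<Rightarrow> bool" where
  "sublat X \<longleftrightarrow> (\<forall>b. (\<forall>x. b \<le> x) \<longrightarrow> b \<in> X) \<and> (\<forall>t. (\<forall>x. x \<le> t) \<longrightarrow> t \<in> X)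
     \<and> (\<forall>x\<in>X. \<forall>y\<in>X. sup x y \<in> X \<and> inf x y \<in> X)"

lemma inf_closed_min:
  fixes A :: "'a::lattice set"
  assumes "finite A" "A \<noteq> {}" "\<forall>x\<in>A. \<forall>y\<in>A. inf x y \<in> A"
  shows "\<exists>m\<in>A. \<forall>x\<in>A. m \<le> x"
proof -
  obtain m where m: "m \<in> A" "\<forall>b\<in>A. b \<le> m \<longrightarrow> b = m"
    using finite_has_minimal[OF assms(1,2)] by blast
  have "m \<le> x" if "x \<in> A" for x
  proof -
    have "inf m x \<in> A" using assms(3) m(1) that by blast
    then have "inf m x = m" using m(2) by simp
    then show ?thesis by (metis inf.orderI)
  qed
  with m show ?thesis by blast
qed

lemma sup_closed_max:
  fixes A :: "'a::lattice set"
  assumes "finite A" "A \<noteq> {}" "\<forall>x\<in>A. \<forall>y\<in>A. sup x y \<in> A"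
  shows "\<exists>m\<in>A. \<forall>x\<in>A. x \<le> m"
proof -
  obtain m where m: "m \<in> A" "\<forall>b\<in>A. m \<le> b \<longrightarrow> b = m"
    using finite_has_maximal[OF assms(1,2)] by blast
  have "x \<le> m" if "x \<in> A" for x
  proof -
    have "sup m x \<in> A" using assms(3) m(1) that by blast
    then have "sup m x = m" using m(2) by simp
    then show ?thesis by (metis sup.orderI)
  qed
  with m show ?thesis by blast
qed

lemma has_bot: "\<exists>b::'a::{finite,lattice}. \<forall>x. b \<le> x"
  using inf_closed_min[of "UNIV::'a set"] by auto

lemma has_top: "\<exists>t::'a::{finite,lattice}. \<forall>x. x \<le> t"
  using sup_closed_max[of "UNIV::'a set"] by auto

lemma sublat_step:
  fixes X :: "'a::{finite,lattice} set"
  assumes S: "sublat X" and D: "dismantling X u v"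
  shows "sublat (X - interval_in X u v)"
proof -
  have uX: "u \<in> X" and vX: "v \<in> X" and nb: "\<not> is_bot_of X u" and nt: "\<not> is_top_of X v"
    and sp: "sup_prime_in (down_in X v) u" and ip: "inf_prime_in (up_in X u) v"
    using D unfolding dismantling_def by auto
  have cl: "\<forall>x\<in>X. \<forall>y\<in>X. sup x y \<in> X \<and> inf x y \<in> X" using S unfolding sublat_def by blast
  have b: "b \<in> X - interval_in X u v" if "\<forall>x. b \<le> x" for b
  proof -
    have "b \<in> X" using S that unfolding sublat_def by blast
    moreover have "\<not> u \<le> b"
    proof
      assume "u \<le> b" then have "is_bot_of X u" using uX that unfolding is_bot_of_def
        by (meson order_trans)
      with nb show False by simp
    qed
    ultimately show ?thesis unfolding interval_in_def by auto
  qed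
  have t: "t \<in> X - interval_in X u v" if "\<forall>x. x \<le> t" for t
  proof -
    have "t \<in> X" using S that unfolding sublat_def by blast
    moreover have "\<not> t \<le> v"
    proof
      assume "t \<le> v" then have "is_top_of X v" using vX that unfolding is_top_of_def
        by (meson order_trans)
      with nt show False by simp
    qed
    ultimately show ?thesis unfolding interval_in_def by auto
  qed
  have j: "sup x y \<in> X - interval_in X u v \<and> inf x y \<in> X - interval_in X u v"
    if x: "x \<in> X - interval_in X u v" and y: "y \<in> X - interval_in X u v" for x y
  proof
    have xX: "x \<in> X" and yX: "y \<in> X" using x y unfolding interval_in_def by auto
    show "sup x y \<in> X - interval_in X u v"
    proof (rule ccontr)
      assume "sup x y \<notin> X - interval_in X u v"
      then have h: "u \<le> sup x y" "sup x y \<le> v" using cl xX yX unfolding interval_in_def by auto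
      have xd: "x \<in> down_in X v" "y \<in> down_in X v" using h xX yX unfolding down_in_def
        by (auto intro: order_trans)
      have "is_join_in (down_in X v) x y (sup x y)"
        using h cl xX yX unfolding is_join_in_def down_in_def by auto
      then have "u \<le> x \<or> u \<le> y" using sp xd h unfolding sup_prime_in_def by blast
      then show False using x y xd unfolding interval_in_def down_in_def by auto
    qed
    show "inf x y \<in> X - interval_in X u v"
    proof (rule ccontr)
      assume "inf x y \<notin> X - interval_in X u v"
      then have h: "u \<le> inf x y" "inf x y \<le> v" using cl xX yX unfolding interval_in_def by auto
      have xd: "x \<in> up_in X u" "y \<in> up_in X u" using h xX yX unfolding up_in_def
        by (auto intro: order_trans)
      have "is_meet_in (up_in X u) x y (inf x y)"
        using h cl xX yX unfolding is_meet_in_def up_in_def by auto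
      then have "x \<le> v \<or> y \<le> v" using ip xd h unfolding inf_prime_in_def by blast
      then show False using x y xd unfolding interval_in_def up_in_def by auto
    qed
  qed
  show ?thesis unfolding sublat_def using b t j by blast
qed

lemma DI_sublat:
  fixes X :: "'a::{finite,lattice} set"
  shows "X \<in> DI UNIV \<Longrightarrow> sublat X"
proof (induction rule: DI.induct)
  case base
  then show ?case unfolding sublat_def by auto
next
  case (step X u v)
  then show ?case using sublat_step by blast
qed

lemma restrict_dism:
  fixes X C :: "'a::{finite,lattice} set"
  assumes SX: "sublat X" and SC: "sublat C" and CX: "C \<subseteq> X" and D: "dismantling X u v"
    and ne: "C \<inter> interval_in X u v \<noteq> {}"
  shows "\<exists>u' v'. dismantling C u' v' \<and> interval_in C u' v' = C \<inter> interval_in X u v"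
proof -
  let ?A = "C \<inter> interval_in X u v"
  have uX: "u \<in> X" and vX: "v \<in> X" and nb: "\<not> is_bot_of X u" and nt: "\<not> is_top_of X v"
    and sp: "sup_prime_in (down_in X v) u" and ip: "inf_prime_in (up_in X u) v"
    using D unfolding dismantling_def by auto
  have clC: "\<forall>x\<in>C. \<forall>y\<in>C. sup x y \<in> C \<and> inf x y \<in> C" using SC unfolding sublat_def by blast
  have clA: "\<forall>x\<in>?A. \<forall>y\<in>?A. sup x y \<in> ?A \<and> inf x y \<in> ?A"
    using clC CX unfolding interval_in_def by (auto intro: le_supI1 le_infI1)
  obtain u' where u': "u' \<in> ?A" "\<forall>x\<in>?A. u' \<le> x"
    using inf_closed_min[of ?A] clA ne by auto
  obtain v' where v': "v' \<in> ?A" "\<forall>x\<in>?A. x \<le> v'"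
    using sup_closed_max[of ?A] clA ne by auto
  have I: "interval_in C u' v' = ?A"
  proof
    show "interval_in C u' v' \<subseteq> ?A"
      using u'(1) v'(1) CX unfolding interval_in_def by (auto intro: order_trans)
    show "?A \<subseteq> interval_in C u' v'"
      using u'(2) v'(2) unfolding interval_in_def by auto
  qed
  have uu: "u \<le> u'" and vv: "v' \<le> v" using u'(1) v'(1) unfolding interval_in_def by auto
  have d1: "u' \<in> C" "v' \<in> C" "u' \<le> v'" using u' v' by auto
  have d2: "\<not> is_bot_of C u'"
  proof
    assume a: "is_bot_of C u'"
    obtain b :: 'a where b: "\<forall>x. b \<le> x" using has_bot by blast
    then have "b \<in> C" using SC unfolding sublat_def by blast
    then have "u' \<le> b" using a unfolding is_bot_of_def by blast
    then have "is_bot_of X u" using uu b uX unfolding is_bot_of_def by (meson order_trans)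
    with nb show False by simp
  qed
  have d3: "\<not> is_top_of C v'"
  proof
    assume a: "is_top_of C v'"
    obtain t :: 'a where t: "\<forall>x. x \<le> t" using has_top by blast
    then have "t \<in> C" using SC unfolding sublat_def by blast
    then have "t \<le> v'" using a unfolding is_top_of_def by blast
    then have "is_top_of X v" using vv t vX unfolding is_top_of_def by (meson order_trans)
    with nt show False by simp
  qed
  have d4: "sup_prime_in (down_in C v') u'"
    unfolding sup_prime_in_def
  proof (intro ballI allI impI)
    fix x y z assume x: "x \<in> down_in C v'" and y: "y \<in> down_in C v'"
      and j: "is_join_in (down_in C v') x y z" and uz: "u' \<le> z"
    have xC: "x \<in> C" "y \<in> C" "x \<le> v'" "y \<le> v'" using x y unfolding down_in_def by auto
    have "sup x y \<in> down_in C v'" using xC clC unfolding down_in_def by auto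
    then have "z \<le> sup x y" using j unfolding is_join_in_def by auto
    then have h: "u \<le> sup x y" using uz uu by (meson order_trans)
    have xd: "x \<in> down_in X v" "y \<in> down_in X v" using xC CX vv unfolding down_in_def
      by (auto intro: order_trans)
    have "sup x y \<le> v" using xC vv by (meson le_sup_iff order_trans)
    then have "is_join_in (down_in X v) x y (sup x y)"
      using xC CX clC unfolding is_join_in_def down_in_def by auto
    then have "u \<le> x \<or> u \<le> y" using sp xd h unfolding sup_prime_in_def by blast
    then have "x \<in> ?A \<or> y \<in> ?A" using xd xC unfolding interval_in_def down_in_def by auto
    then show "u' \<le> x \<or> u' \<le> y" using u'(2) by blast
  qed
  have d5: "inf_prime_in (up_in C u') v'"
    unfolding inf_prime_in_def
  proof (intro ballI allI impI)
    fix x y z assume x: "x \<in> up_in C u'" and y: "y \<in> up_in C u'"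
      and j: "is_meet_in (up_in C u') x y z" and uz: "z \<le> v'"
    have xC: "x \<in> C" "y \<in> C" "u' \<le> x" "u' \<le> y" using x y unfolding up_in_def by auto
    have "inf x y \<in> up_in C u'" using xC clC unfolding up_in_def by auto
    then have "inf x y \<le> z" using j unfolding is_meet_in_def by auto
    then have h: "inf x y \<le> v" using uz vv by (meson order_trans)
    have xd: "x \<in> up_in X u" "y \<in> up_in X u" using xC CX uu unfolding up_in_def
      by (auto intro: order_trans)
    have "u \<le> inf x y" using xC uu by (meson le_inf_iff order_trans)
    then have "is_meet_in (up_in X u) x y (inf x y)"
      using xC CX clC unfolding is_meet_in_def up_in_def by auto
    then have "x \<le> v \<or> y \<le> v" using ip xd h unfolding inf_prime_in_def by blast
    then have "x \<in> ?A \<or> y \<in> ?A" using xd xC unfolding interval_in_def up_in_def by auto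
    then show "x \<le> v' \<or> y \<le> v'" using v'(2) by blast
  qed
  show ?thesis using d1 d2 d3 d4 d5 I unfolding dismantling_def by blast
qed

theorem theorem2:
  shows "\<exists>!C. DI_core (UNIV :: ('a::{finite, lattice}) set) C"
proof -
  have fin: "finite (DI (UNIV :: 'a set))" by (rule finite_subset[of _ "Pow UNIV"]) auto
  have ne: "DI (UNIV :: 'a set) \<noteq> {}" using DI.base by blast
  obtain M where M: "M \<in> DI (UNIV :: 'a set)" "\<forall>Y\<in>DI UNIV. Y \<subseteq> M \<longrightarrow> Y = M"
    using finite_has_minimal[OF fin ne] by blast
  have SM: "sublat M" using DI_sublat M(1) by blast
  have all: "M \<subseteq> X" if "X \<in> DI UNIV" for X
    using that
  proof (induction rule: DI.induct)
    case base then show ?case by simp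
  next
    case (step X u v)
    show ?case
    proof (cases "M \<inter> interval_in X u v = {}")
      case True then show ?thesis using step by blast
    next
      case False
      obtain u' v' where uv: "dismantling M u' v'" "interval_in M u' v' = M \<inter> interval_in X u v"
        using restrict_dism[OF DI_sublat[OF step.hyps(1)] SM step.IH step.hyps(2) False] by blast
      have "M - interval_in M u' v' \<in> DI UNIV" using DI.step[OF M(1) uv(1)] .
      moreover have "M - interval_in M u' v' \<subseteq> M" by blast
      ultimately have "M - interval_in M u' v' = M" using M(2) by blast
      then show ?thesis using uv(2) False by blast
    qed
  qed
  show ?thesis
  proof
    show "DI_core UNIV M" unfolding DI_core_def using M(1) all by blast
  next
    fix C assume "DI_core (UNIV :: 'a set) C"
    then show "C = M" unfolding DI_core_def using M(1) all by blast
  qed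
qed

end
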